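(* For all $n\ge1$, $$w(\bar D_{2n})=\frac{2}{4^n\,n!},\qquad w(\bar D_{2n+1})=\frac1{\sqrt\pi}\cdot\frac1{2^{n-1}(2n+1)!!}.$$ In particular $w(\bar D_k)\neq0$ for all $k\ge2$.
   Context: $\mathcal A$ is the free associative $\mathbb R$-algebra of noncommutative polynomials in two symbols $N$ (degree 1) and $\Delta$ (degree 2). Every $A\in\mathcal A$ homogeneous of degree $\ge1$ is uniquely written $A=\bar AN+\tilde A\Delta$ with $\bar A,\tilde A\in\mathcal A$. The weight $w:\mathcal A\to\mathbb R$ is the algebra homomorphism with $w(I)=1$, $w(N)=2$, $w(\Delta)=-1$. Define $R_{kj},S_{kj}$ ($k,j$ integers): $R_{00}=I$, $S_{00}=0$, $R_{kj}=S_{kj}=0$ if $k<0$ or $j<0$, otherwise $R_{kj}=-(N^2+\Delta)R_{k-1,j}+NS_{k-1,j}$, $S_{kj}=\Delta NR_{k-1,j}-\Delta S_{k-1,j}+NR_{k-1,j-1}$. Let $\{a,b\}=\frac{\Gamma(a+b+\frac12)}{(a+b)!\Gamma(a+\frac12)}$, $Z_{n+1}=\sum_{j=0}^n\{n+1,j-1\}R_{n+j,j}$, $\alpha_n=\sum_{j=0}^{n+1}\{n,j\}S_{n+j,j}$. The heat content operators are $D_1=\frac2{\sqrt\pi}I$ and for $n\ge1$: $D_{2n}=\frac1{\sqrt\pi}\sum_{i=1}^n\frac{\Gamma(i+\frac12)\Gamma(n-i+\frac12)}{n!}D_{2i-1}\alpha_{n-i}$, $D_{2n+1}=\frac1{\sqrt\pi}Z_{n+1}+\frac1{\sqrt\pi}\sum_{i=1}^n\frac{i!\Gamma(n-i+\frac12)}{\Gamma(n+\frac32)}D_{2i}\alpha_{n-i}$.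 $D_k$ is homogeneous of degree $k-1$. *)

theory Defs
  imports "HOL-Analysis.Analysis"
begin

text \<open>The free associative real algebra on two letters N (degree 1) and Delta (degree 2).
An element is represented by its coefficient function on words (lists of letters);
all elements arising below have finite support, i.e. are noncommutative polynomials.\<close>

datatype letter = LN | LD

type_synonym ncp = "letter list \<Rightarrow> real"

definition nc_zero :: ncp where "nc_zero = (\<lambda>u. 0)"
definition nc_one :: ncp where "nc_one = (\<lambda>u. if u = [] then 1 else 0)"
definition nc_N :: ncp where "nc_N = (\<lambda>u. if u = [LN] then 1 else 0)"
definition nc_D :: ncp where "nc_D = (\<lambda>u. if u = [LD] then 1 else 0)"
definition nc_add :: "ncp \<Rightarrow> ncp \<Rightarrow> ncp" where "nc_add A B = (\<lambda>u. A u + B u)"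
definition nc_smult :: "real \<Rightarrow> ncp \<Rightarrow> ncp" where "nc_smult c A = (\<lambda>u. c * A u)"
definition nc_mult :: "ncp \<Rightarrow> ncp \<Rightarrow> ncp" where
  "nc_mult A B = (\<lambda>u. \<Sum>i\<le>length u. A (take i u) * B (drop i u))"

text \<open>For homogeneous A of degree \<ge> 1, A = bar A * N + tilde A * Delta.\<close>
definition nc_bar :: "ncp \<Rightarrow> ncp" where "nc_bar A = (\<lambda>u. A (u @ [LN]))"
definition nc_tilde :: "ncp \<Rightarrow> ncp" where "nc_tilde A = (\<lambda>u. A (u @ [LD]))"

definition letter_wt :: "letter \<Rightarrow> real" where
  "letter_wt l = (case l of LN \<Rightarrow> 2 | LD \<Rightarrow> -1)"
definition word_wt :: "letter list \<Rightarrow> real" where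
  "word_wt u = prod_list (map letter_wt u)"
definition weight :: "ncp \<Rightarrow> real" where
  "weight A = (\<Sum>u\<in>{u. A u \<noteq> 0}. A u * word_wt u)"

text \<open>R_{kj}, S_{kj} for k, j \<ge> 0 (they vanish for negative indices).\<close>
fun RS :: "nat \<Rightarrow> nat \<Rightarrow> ncp \<times> ncp" where
  "RS 0 j = (if j = 0 then nc_one else nc_zero, nc_zero)"
| "RS (Suc k) j =
     (let r = fst (RS k j); s = snd (RS k j);
          r' = (if j = 0 then nc_zero else fst (RS k (j - 1)))
      in (nc_add (nc_smult (-1) (nc_mult (nc_add (nc_mult nc_N nc_N) nc_D) r)) (nc_mult nc_N s),
          nc_add (nc_add (nc_mult (nc_mult nc_D nc_N) r) (nc_smult (-1) (nc_mult nc_D s)))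
                 (nc_mult nc_N r')))"

definition R :: "nat \<Rightarrow> nat \<Rightarrow> ncp" where "R k j = fst (RS k j)"
definition S :: "nat \<Rightarrow> nat \<Rightarrow> ncp" where "S k j = snd (RS k j)"

text \<open>{a,b} = Gamma(a+b+1/2) / ((a+b)! Gamma(a+1/2)), used only with a+b \<ge> 0.\<close>
definition brace :: "int \<Rightarrow> int \<Rightarrow> real" where
  "brace a b = Gamma (of_int (a + b) + 1/2) / (fact (nat (a + b)) * Gamma (of_int a + 1/2))"

text \<open>Zsucc n is Z_{n+1} = sum_{j=0}^n {n+1, j-1} R_{n+j,j}.\<close>
definition Zsucc :: "nat \<Rightarrow> ncp" where
  "Zsucc n = (\<lambda>u. \<Sum>j=0..n. brace (int n + 1) (int j - 1) * R (n + j) j u)"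

definition alpha :: "nat \<Rightarrow> ncp" where
  "alpha n = (\<lambda>u. \<Sum>j=0..n+1. brace (int n) (int j) * S (n + j) j u)"

text \<open>Heat content operators D_k, k \<ge> 1 (D_0 is unused and set to 0).\<close>
function Dop :: "nat \<Rightarrow> ncp" where
  "Dop k =
    (if k = 0 then nc_zero
     else if k = 1 then nc_smult (2 / sqrt pi) nc_one
     else if even k then
       (let n = k div 2 in
        (\<lambda>u. \<Sum>i=1..n. (1 / sqrt pi) * (Gamma (real i + 1/2) * Gamma (real (n - i) + 1/2) / fact n)
                 * nc_mult (Dop (2 * i - 1)) (alpha (n - i)) u))
     else
       (let n = k div 2 in
        (\<lambda>u. (1 / sqrt pi) * Zsucc n u +
             (\<Sum>i=1..n. (1 / sqrt pi) * (fact i * Gamma (real (n - i) + 1/2) / Gamma (real n + 3/2))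
                 * nc_mult (Dop (2 * i)) (alpha (n - i)) u))))"
  by auto
termination
  by (relation "Wellfounded.measure id") (auto elim!: oddE)

fun dfact :: "nat \<Rightarrow> nat" where
  "dfact 0 = 1"
| "dfact (Suc 0) = 1"
| "dfact (Suc (Suc n)) = Suc (Suc n) * dfact n"

end

theory Submission
  imports Defs
begin


definition supp :: "ncp \<Rightarrow> letter list set" where "supp A = {u. A u \<noteq> 0}"
definition fin :: "ncp \<Rightarrow> bool" where "fin A = finite (supp A)"

lemma word_wt_append: "word_wt (a @ b) = word_wt a * word_wt b"
  by (simp add: word_wt_def)

lemma weight_eq:
  assumes "finite T" "supp A \<subseteq> T"
  shows "weight A = (\<Sum>u\<in>T. A u * word_wt u)"
proof -
  have "weight A = (\<Sum>u\<in>supp A. A u * word_wt u)" by (simp add: weight_def supp_def)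
  also have "\<dots> = (\<Sum>u\<in>T. A u * word_wt u)"
    by (rule sum.mono_neutral_left) (use assms in \<open>auto simp: supp_def\<close>)
  finally show ?thesis .
qed

lemma fin_sum:
  assumes "finite I" "\<forall>i\<in>I. fin (f i)"
  shows "fin (\<lambda>u. \<Sum>i\<in>I. f i u)"
proof -
  have "supp (\<lambda>u. \<Sum>i\<in>I. f i u) \<subseteq> (\<Union>i\<in>I. supp (f i))"
    by (auto simp: supp_def intro: ccontr dest: sum.not_neutral_contains_not_neutral)
  then show ?thesis using assms unfolding fin_def by (meson finite_UN_I finite_subset)
qed

lemma weight_sum:
  assumes "finite I" "\<forall>i\<in>I. fin (f i)"
  shows "weight (\<lambda>u. \<Sum>i\<in>I. f i u) = (\<Sum>i\<in>I. weight (f i))"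
proof -
  define T where "T = (\<Union>i\<in>I. supp (f i))"
  have fT: "finite T" using assms unfolding T_def fin_def by auto
  have "supp (\<lambda>u. \<Sum>i\<in>I. f i u) \<subseteq> T"
    by (auto simp: supp_def T_def intro: ccontr dest: sum.not_neutral_contains_not_neutral)
  then have "weight (\<lambda>u. \<Sum>i\<in>I. f i u) = (\<Sum>u\<in>T. (\<Sum>i\<in>I. f i u) * word_wt u)"
    using weight_eq fT by blast
  also have "\<dots> = (\<Sum>i\<in>I. \<Sum>u\<in>T. f i u * word_wt u)"
    by (simp add: sum_distrib_right sum.swap[of _ T])
  also have "\<dots> = (\<Sum>i\<in>I. weight (f i))"
    by (rule sum.cong[OF refl], rule weight_eq[symmetric]) (use fT in \<open>auto simp: T_def\<close>)
  finally show ?thesis .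
qed

lemma fin_scale: "fin A \<Longrightarrow> fin (\<lambda>u. c * A u)"
  unfolding fin_def supp_def by (rule finite_subset[of _ "{u. A u \<noteq> 0}"]) auto

lemma weight_scale: "fin A \<Longrightarrow> weight (\<lambda>u. c * A u) = c * weight A"
proof -
  assume "fin A"
  then have "weight (\<lambda>u. c * A u) = (\<Sum>u\<in>supp A. c * A u * word_wt u)"
    by (intro weight_eq) (auto simp: fin_def supp_def)
  also have "\<dots> = c * weight A" using \<open>fin A\<close>
    by (simp add: weight_eq[OF _ order_refl] fin_def sum_distrib_left mult.assoc)
  finally show ?thesis .
qed

lemma fin_add: "fin A \<Longrightarrow> fin B \<Longrightarrow> fin (nc_add A B)"
  unfolding fin_def supp_def nc_add_def
  by (rule finite_subset[of _ "{u. A u \<noteq> 0} \<union> {u. B u \<noteq> 0}"]) auto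

lemma weight_add: "fin A \<Longrightarrow> fin B \<Longrightarrow> weight (nc_add A B) = weight A + weight B"
proof -
  assume a: "fin A" "fin B"
  define T where "T = supp A \<union> supp B"
  have fT: "finite T" using a by (simp add: T_def fin_def)
  have "supp (nc_add A B) \<subseteq> T" by (auto simp: T_def supp_def nc_add_def)
  then have "weight (nc_add A B) = (\<Sum>u\<in>T. nc_add A B u * word_wt u)"
    by (rule weight_eq[OF fT])
  also have "\<dots> = (\<Sum>u\<in>T. (A u + B u) * word_wt u)" by (simp add: nc_add_def)
  also have "\<dots> = (\<Sum>u\<in>T. A u * word_wt u) + (\<Sum>u\<in>T. B u * word_wt u)"
    by (simp add: distrib_right sum.distrib)
  also have "\<dots> = weight A + weight B"
    using weight_eq[OF fT, of A] weight_eq[OF fT, of B] by (simp add: T_def)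
  finally show ?thesis .
qed

lemma fin_smult: "fin A \<Longrightarrow> fin (nc_smult c A)"
  unfolding nc_smult_def by (rule fin_scale)
lemma weight_smult: "fin A \<Longrightarrow> weight (nc_smult c A) = c * weight A"
  unfolding nc_smult_def by (rule weight_scale)

lemma fin_zero: "fin nc_zero" by (simp add: fin_def supp_def nc_zero_def)
lemma fin_one: "fin nc_one"
  unfolding fin_def supp_def nc_one_def by (rule finite_subset[of _ "{[]}"]) auto
lemma fin_N: "fin nc_N"
  unfolding fin_def supp_def nc_N_def by (rule finite_subset[of _ "{[LN]}"]) auto
lemma fin_D: "fin nc_D"
  unfolding fin_def supp_def nc_D_def by (rule finite_subset[of _ "{[LD]}"]) auto

lemma weight_zero: "weight nc_zero = 0" by (simp add: weight_def nc_zero_def)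
lemma weight_one: "weight nc_one = 1"
  by (subst weight_eq[of "{[]}"]) (auto simp: supp_def nc_one_def word_wt_def)
lemma weight_N: "weight nc_N = 2"
  by (subst weight_eq[of "{[LN]}"]) (auto simp: supp_def nc_N_def word_wt_def letter_wt_def)
lemma weight_D: "weight nc_D = -1"
  by (subst weight_eq[of "{[LD]}"]) (auto simp: supp_def nc_D_def word_wt_def letter_wt_def)

lemma mult_key:
  "nc_mult A B u = (\<Sum>p\<in>{p\<in>supp A \<times> supp B. fst p @ snd p = u}. A (fst p) * B (snd p))"
proof -
  define g where "g = (\<lambda>i. (take i u, drop i u))"
  have inj: "inj_on g {..length u}"
  proof (rule inj_onI)
    fix x y assume "x \<in> {..length u}" "y \<in> {..length u}" "g x = g y"
    then have "length (take x u) = length (take y u)" by (simp add: g_def)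
    then show "x = y" using \<open>x \<in> _\<close> \<open>y \<in> _\<close> by simp
  qed
  have "nc_mult A B u = (\<Sum>i\<le>length u. A (fst (g i)) * B (snd (g i)))"
    by (simp add: nc_mult_def g_def)
  also have "\<dots> = (\<Sum>p\<in>g ` {..length u}. A (fst p) * B (snd p))"
    by (simp add: sum.reindex[OF inj])
  also have "\<dots> = (\<Sum>p\<in>{p\<in>supp A \<times> supp B. fst p @ snd p = u}. A (fst p) * B (snd p))"
  proof (rule sum.mono_neutral_right)
    show "finite (g ` {..length u})" by simp
    show "{p \<in> supp A \<times> supp B. fst p @ snd p = u} \<subseteq> g ` {..length u}"
    proof
      fix p assume "p \<in> {p \<in> supp A \<times> supp B. fst p @ snd p = u}"
      then have "fst p @ snd p = u" by simp
      then have "p = g (length (fst p))" "length (fst p) \<le> length u"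
        by (auto simp: g_def prod_eq_iff)
      then show "p \<in> g ` {..length u}" by auto
    qed
    show "\<forall>i\<in>g ` {..length u} - {p \<in> supp A \<times> supp B. fst p @ snd p = u}. A (fst i) * B (snd i) = 0"
      by (auto simp: g_def supp_def)
  qed
  finally show ?thesis .
qed

lemma fin_mult: "fin A \<Longrightarrow> fin B \<Longrightarrow> fin (nc_mult A B)"
proof -
  assume a: "fin A" "fin B"
  have "supp (nc_mult A B) \<subseteq> (\<lambda>p. fst p @ snd p) ` (supp A \<times> supp B)"
  proof
    fix u assume "u \<in> supp (nc_mult A B)"
    then have "nc_mult A B u \<noteq> 0" by (simp add: supp_def)
    then obtain p where "p \<in> {p\<in>supp A \<times> supp B. fst p @ snd p = u}"
      unfolding mult_key by (meson sum.neutral)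
    then show "u \<in> (\<lambda>p. fst p @ snd p) ` (supp A \<times> supp B)" by force
  qed
  then show ?thesis using a unfolding fin_def by (meson finite_SigmaI finite_imageI finite_subset)
qed

lemma weight_mult:
  assumes a: "fin A" "fin B"
  shows "weight (nc_mult A B) = weight A * weight B"
proof -
  define P where "P = supp A \<times> supp B"
  define h where "h = (\<lambda>p::letter list \<times> letter list. fst p @ snd p)"
  have fP: "finite P" using a by (simp add: P_def fin_def)
  have sub: "supp (nc_mult A B) \<subseteq> h ` P"
  proof
    fix u assume "u \<in> supp (nc_mult A B)"
    then have "nc_mult A B u \<noteq> 0" by (simp add: supp_def)
    then obtain p where "p \<in> {p\<in>supp A \<times> supp B. fst p @ snd p = u}"
      unfolding mult_key by (meson sum.neutral)
    then show "u \<in> h ` P" by (force simp: h_def P_def)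
  qed
  have "weight (nc_mult A B) = (\<Sum>u\<in>h ` P. nc_mult A B u * word_wt u)"
    by (rule weight_eq[OF _ sub]) (simp add: fP)
  also have "\<dots> = (\<Sum>u\<in>h ` P. \<Sum>p\<in>{p\<in>P. h p = u}. A (fst p) * B (snd p) * word_wt (h p))"
    by (rule sum.cong[OF refl]) (simp add: mult_key P_def h_def sum_distrib_right)
  also have "\<dots> = (\<Sum>p\<in>P. A (fst p) * B (snd p) * word_wt (h p))"
    by (rule sum.image_gen[OF fP, symmetric])
  also have "\<dots> = (\<Sum>p\<in>P. (A (fst p) * word_wt (fst p)) * (B (snd p) * word_wt (snd p)))"
    by (simp add: h_def word_wt_append mult_ac)
  also have "\<dots> = (\<Sum>a\<in>supp A. A a * word_wt a) * (\<Sum>b\<in>supp B. B b * word_wt b)"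
    by (simp add: P_def sum_product sum.cartesian_product case_prod_beta)
  also have "\<dots> = weight A * weight B"
    using weight_eq[OF _ order_refl, of A] weight_eq[OF _ order_refl, of B] a by (simp add: fin_def)
  finally show ?thesis .
qed

lemma mult_nil: "nc_mult A B [] = A [] * B []"
  by (simp add: nc_mult_def)

lemma bar_mult: "nc_bar (nc_mult A B) = (\<lambda>u. nc_mult A (nc_bar B) u + B [] * nc_bar A u)"
proof
  fix u
  have "nc_bar (nc_mult A B) u = (\<Sum>i\<le>Suc (length u). A (take i (u @ [LN])) * B (drop i (u @ [LN])))"
    by (simp add: nc_bar_def nc_mult_def)
  also have "\<dots> = (\<Sum>i\<le>length u. A (take i (u @ [LN])) * B (drop i (u @ [LN]))) + A (u @ [LN]) * B []"
    by (simp add: sum.atMost_Suc)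
  also have "(\<Sum>i\<le>length u. A (take i (u @ [LN])) * B (drop i (u @ [LN]))) = 
     (\<Sum>i\<le>length u. A (take i u) * B (drop i u @ [LN]))"
    by (rule sum.cong) auto
  finally show "nc_bar (nc_mult A B) u = nc_mult A (nc_bar B) u + B [] * nc_bar A u"
    by (simp add: nc_mult_def nc_bar_def)
qed

lemma fin_bar: "fin A \<Longrightarrow> fin (nc_bar A)"
proof -
  assume "fin A"
  have "supp (nc_bar A) = (\<lambda>u. u @ [LN]) -` supp A" by (auto simp: supp_def nc_bar_def)
  moreover have "finite ((\<lambda>u. u @ [LN]) -` supp A)"
    by (rule finite_vimageI) (use \<open>fin A\<close> in \<open>auto simp: fin_def inj_def\<close>)
  ultimately show ?thesis by (simp add: fin_def)
qed

lemma weight_bar_mult: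
  assumes "fin A" "fin B"
  shows "weight (nc_bar (nc_mult A B)) = weight A * weight (nc_bar B) + B [] * weight (nc_bar A)"
proof -
  have "weight (nc_bar (nc_mult A B)) = weight (nc_add (nc_mult A (nc_bar B)) (\<lambda>u. B [] * nc_bar A u))"
    by (simp add: bar_mult nc_add_def)
  also have "\<dots> = weight A * weight (nc_bar B) + B [] * weight (nc_bar A)"
    using assms by (simp add: weight_add fin_mult fin_bar fin_scale weight_mult weight_scale)
  finally show ?thesis .
qed

lemma bar_add: "nc_bar (nc_add A B) = nc_add (nc_bar A) (nc_bar B)"
  by (simp add: nc_bar_def nc_add_def)
lemma bar_smult: "nc_bar (nc_smult c A) = nc_smult c (nc_bar A)"
  by (simp add: nc_bar_def nc_smult_def)
lemma bar_sum: "nc_bar (\<lambda>u. \<Sum>i\<in>I. f i u) = (\<lambda>u. \<Sum>i\<in>I. nc_bar (f i) u)"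
  by (simp add: nc_bar_def)
lemma bar_scale: "nc_bar (\<lambda>u. c * A u) = (\<lambda>u. c * nc_bar A u)"
  by (simp add: nc_bar_def)
lemma bar_zero: "nc_bar nc_zero = nc_zero" by (simp add: nc_bar_def nc_zero_def)
lemma bar_one: "nc_bar nc_one = nc_zero" by (simp add: nc_bar_def nc_zero_def nc_one_def)
lemma bar_N: "nc_bar nc_N = nc_one" by (auto simp: nc_bar_def nc_one_def nc_N_def fun_eq_iff)
lemma bar_D: "nc_bar nc_D = nc_zero" by (auto simp: nc_bar_def nc_zero_def nc_D_def fun_eq_iff)



definition rr :: "nat \<Rightarrow> nat \<Rightarrow> real" where
  "rr k j = (-1)^k * 4^j * (real (k choose (2*j)) + 2 * real (k choose (2*j+1)))"
definition ss :: "nat \<Rightarrow> nat \<Rightarrow> real" where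
  "ss k j = (-1)^k * 2 * (4^j * real (k choose (2*j+1)) -
      (if j = 0 then 0 else 4^(j-1) * real (k choose (2*j-1))))"
definition rbb :: "nat \<Rightarrow> nat \<Rightarrow> real" where "rbb k j = (rr k j - rr (k-1) j) / 2"
definition sbb :: "nat \<Rightarrow> nat \<Rightarrow> real" where "sbb k j = (ss k j - ss (k-1) j) / 2"
definition cst :: "nat \<Rightarrow> nat \<Rightarrow> real" where "cst k j = (if k = 0 \<and> j = 0 then 1 else 0)"

lemma rr_Suc: "rr (Suc k) j = -3 * rr k j + 2 * ss k j"
proof (cases j)
  case 0 then show ?thesis by (simp add: rr_def ss_def algebra_simps)
next
  case (Suc i)
  have e1: "2 * Suc i = Suc (Suc (2*i))" "2 * Suc i + 1 = Suc (Suc (Suc (2*i)))" "2 * Suc i - 1 = Suc (2*i)" by auto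
  show ?thesis unfolding Suc rr_def ss_def e1 by (simp add: algebra_simps)
qed

lemma ss_Suc: "ss (Suc k) j = -2 * rr k j + ss k j + (if j = 0 then 0 else 2 * rr k (j-1))"
proof (cases j)
  case 0 then show ?thesis by (simp add: rr_def ss_def algebra_simps)
next
  case (Suc i)
  have e1: "2 * Suc i = Suc (Suc (2*i))" "2 * Suc i + 1 = Suc (Suc (Suc (2*i)))" "2 * Suc i - 1 = Suc (2*i)" by auto
  show ?thesis unfolding Suc rr_def ss_def e1 by (simp add: algebra_simps)
qed

lemma rr_0: "rr 0 j = (if j = 0 then 1 else 0)" by (simp add: rr_def)
lemma ss_0: "ss 0 j = 0" by (cases j) (simp_all add: ss_def)

lemma rbb_Suc: "rbb (Suc k) j = -3 * rbb k j - 2 * cst k j + 2 * sbb k j"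
proof (cases k)
  case 0 then show ?thesis
    by (simp add: rbb_def sbb_def cst_def rr_Suc rr_0 ss_0)
next
  case (Suc k')
  have "rr (Suc (Suc k')) j = -3 * rr (Suc k') j + 2 * ss (Suc k') j" "rr (Suc k') j = -3 * rr k' j + 2 * ss k' j"
    by (rule rr_Suc)+
  then show ?thesis unfolding Suc rbb_def sbb_def cst_def by (simp add: field_simps)
qed

lemma sbb_Suc: "sbb (Suc k) j = -2 * rbb k j - cst k j + sbb k j +
   (if j = 0 then 0 else 2 * rbb k (j-1) + cst k (j-1))"
proof (cases k)
  case 0 then show ?thesis
    by (simp add: rbb_def sbb_def cst_def ss_Suc rr_0 ss_0)
next
  case (Suc k')
  have "ss (Suc (Suc k')) j = -2 * rr (Suc k') j + ss (Suc k') j + (if j = 0 then 0 else 2 * rr (Suc k') (j-1))"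
       "ss (Suc k') j = -2 * rr k' j + ss k' j + (if j = 0 then 0 else 2 * rr k' (j-1))"
    by (rule ss_Suc)+
  then show ?thesis unfolding Suc rbb_def sbb_def cst_def by (cases j) (simp_all add: field_simps)
qed

lemma nil_simps: "nc_N [] = 0" "nc_D [] = 0" "nc_one [] = 1" "nc_zero [] = 0"
  "nc_add A B [] = A [] + B []" "nc_smult c A [] = c * A []"
  by (simp_all add: nc_N_def nc_D_def nc_one_def nc_zero_def nc_add_def nc_smult_def)

lemma wbar_basic: "weight (nc_bar nc_N) = 1" "weight (nc_bar nc_D) = 0"
  "weight (nc_bar nc_one) = 0" "weight (nc_bar nc_zero) = 0"
  by (simp_all add: bar_N bar_D bar_one bar_zero weight_one weight_zero)

lemmas ncsimps = weight_add weight_smult weight_mult weight_bar_mult bar_add bar_smult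
  fin_add fin_smult fin_mult fin_bar fin_zero fin_one fin_N fin_D
  weight_zero weight_one weight_N weight_D nil_simps mult_nil wbar_basic

lemma RS_props: "fin (R k j) \<and> fin (S k j) \<and> weight (R k j) = rr k j \<and> weight (S k j) = ss k j
  \<and> R k j [] = cst k j \<and> S k j [] = 0
  \<and> weight (nc_bar (R k j)) = rbb k j \<and> weight (nc_bar (S k j)) = sbb k j"
proof (induction k arbitrary: j)
  case 0 then show ?case
    by (simp add: R_def S_def ncsimps rr_0 ss_0 rbb_def sbb_def cst_def)
next
  case (Suc k)
  have IH: "\<And>j. fin (R k j)" "\<And>j. fin (S k j)" "\<And>j. weight (R k j) = rr k j" "\<And>j. weight (S k j) = ss k j"
    "\<And>j. R k j [] = cst k j" "\<And>j. S k j [] = 0"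
    "\<And>j. weight (nc_bar (R k j)) = rbb k j" "\<And>j. weight (nc_bar (S k j)) = sbb k j"
    using Suc.IH by blast+
  have Re: "R (Suc k) j = nc_add (nc_smult (-1) (nc_mult (nc_add (nc_mult nc_N nc_N) nc_D) (R k j))) (nc_mult nc_N (S k j))"
    by (simp add: R_def S_def Let_def)
  have Se: "S (Suc k) j = nc_add (nc_add (nc_mult (nc_mult nc_D nc_N) (R k j)) (nc_smult (-1) (nc_mult nc_D (S k j))))
                 (nc_mult nc_N (if j = 0 then nc_zero else R k (j - 1)))"
    by (simp add: R_def S_def Let_def)
  show ?case
  proof (cases j)
    case 0
    show ?thesis unfolding Re Se using 0
      by (simp add: ncsimps IH rr_Suc ss_Suc rbb_Suc sbb_Suc cst_def)
  next
    case (Suc i)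
    show ?thesis unfolding Re Se using Suc
      by (simp add: ncsimps IH rr_Suc ss_Suc rbb_Suc sbb_Suc cst_def)
  qed
qed



lemma gm_Suc: "Gamma (real (Suc k) + 1/2) = (real k + 1/2) * Gamma (real k + 1/2)"
proof -
  have "real k + 1/2 \<notin> \<int>\<^sub>\<le>\<^sub>0"
  proof
    assume "real k + 1/2 \<in> \<int>\<^sub>\<le>\<^sub>0" then have "real k + 1/2 \<le> 0" by (rule nonpos_Ints_nonpos)
    then show False by simp
  qed
  then have "Gamma (real k + 1/2 + 1) = (real k + 1/2) * Gamma (real k + 1/2)" by (rule Gamma_plus1)
  moreover have "real (Suc k) + 1/2 = real k + 1/2 + 1" by simp
  ultimately show ?thesis by simp
qed

lemma gm_pos: "Gamma (real k + 1/2) > 0" by (rule Gamma_real_pos) simp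

definition cc :: "nat \<Rightarrow> real" where "cc k = Gamma (real k + 1/2) / fact k"

lemma cc_Suc: "cc (Suc k) * (2 * real k + 2) = cc k * (2 * real k + 1)"
proof -
  define G where "G = Gamma (real k + 1/2)"
  define F where "F = (fact k :: real)"
  have nz: "F \<noteq> 0" "real k + 1 \<noteq> 0" by (simp_all add: F_def)
  have c1: "cc (Suc k) = (real k + 1/2) * G / ((real k + 1) * F)"
    unfolding cc_def gm_Suc G_def F_def by simp
  have "cc k = G / F" by (simp add: cc_def G_def F_def)
  have aux: "\<And>a q F::real. q \<noteq> 0 \<Longrightarrow> F \<noteq> 0 \<Longrightarrow> a / (q*F) * (2*q) = 2*a/F"
    by (simp add: field_simps)
  have "cc (Suc k) * (2 * (real k + 1)) = (real k + 1/2) * G / ((real k + 1) * F) * (2 * (real k + 1))"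
    by (simp only: c1)
  also have "\<dots> = 2 * ((real k + 1/2) * G) / F" by (rule aux[OF nz(2) nz(1)])
  also have "\<dots> = cc k * (2 * real k + 1)" unfolding \<open>cc k = G / F\<close> using nz by (simp add: field_simps)
  finally show ?thesis by (simp add: algebra_simps)
qed

lemma cc_0: "cc 0 = sqrt pi" by (simp add: cc_def Gamma_one_half_real)
lemma cc_1: "cc 1 = sqrt pi / 2"
  using cc_Suc[of 0] by (simp add: cc_0)

lemma choose_L1: "(Suc n choose Suc (Suc i)) * (Suc i * Suc (Suc i)) = Suc n * (n - i) * (n choose i)"
proof -
  have a: "Suc (Suc i) * (Suc n choose Suc (Suc i)) = Suc n * (n choose Suc i)"
    by (rule Suc_times_binomial)
  have b: "(n choose Suc i) * Suc i = (n choose i) * (n - i)"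
  proof (cases n)
    case 0 then show ?thesis by simp
  next
    case (Suc n')
    have "Suc i * (Suc n' choose Suc i) = Suc n' * (n' choose i)" by (rule Suc_times_binomial)
    moreover have "(n - i) * (n choose i) = n * ((n - 1) choose i)" by (rule binomial_absorb_comp)
    ultimately show ?thesis using Suc by (simp add: mult_ac del: binomial_Suc_Suc)
  qed
  show ?thesis by (metis a b mult.assoc mult.commute mult.left_commute)
qed

lemma choose_L2: "(n choose Suc i) * Suc i = (n choose i) * (n - i)"
proof (cases n)
  case 0 then show ?thesis by simp
next
  case (Suc n')
  have "Suc i * (Suc n' choose Suc i) = Suc n' * (n' choose i)" by (rule Suc_times_binomial)
  moreover have "(n - i) * (n choose i) = n * ((n - 1) choose i)" by (rule binomial_absorb_comp)
  ultimately show ?thesis using Suc by (simp add: mult_ac del: binomial_Suc_Suc)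
qed

definition aa :: "nat \<Rightarrow> nat \<Rightarrow> real" where
  "aa m j = (-4)^j * cc (m+j) * real ((m+j) choose (2*j)) / (2*j+1)"

lemma aa_step: "(real m * (2*m+1) - real J * (2*J+1)) * aa m J = - (real J + 1) * (2*J+3) * aa m (Suc J)"
proof (cases "J \<le> m")
  case False
  then have "(m+J) choose (2*J) = 0" "Suc (m + J) choose Suc (Suc (2 * J)) = 0" by simp_all
  then show ?thesis by (simp add: aa_def binomial_eq_0 del: binomial_Suc_Suc)
next
  case True
  define k where "k = m + J"
  define X where "X = real (k choose (2*J))"
  define Y where "Y = real (Suc k choose Suc (Suc (2*J)))"
  have Y: "Y * ((2*J+1) * (2*J+2)) = (k+1) * (real m - real J) * X"
  proof -
    have n: "(Suc k choose Suc (Suc (2*J))) * (Suc (2*J) * Suc (Suc (2*J))) = Suc k * (k - 2*J) * (k choose (2*J))"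
      by (rule choose_L1)
    have e: "Y * (real (Suc (2*J)) * real (Suc (Suc (2*J)))) = real (Suc k) * real (k - 2*J) * X"
      unfolding X_def Y_def using arg_cong[OF n, of real] by (simp only: of_nat_mult)
    have kd: "real (k - 2*J) = real m - real J" using True by (simp add: k_def of_nat_diff)
    show ?thesis using e unfolding kd by (simp add: algebra_simps)
  qed
  have C: "cc (Suc k) * (2 * real k + 2) = cc k * (2 * real k + 1)" by (rule cc_Suc)
  have e1: "aa m J = (-4)^J * cc k * X / (2*J+1)" by (simp add: aa_def k_def X_def)
  have e2: "aa m (Suc J) = - 4 * (-4)^J * cc (Suc k) * Y / (2*J+3)"
    by (simp add: aa_def k_def Y_def numeral_eq_Suc del: binomial_Suc_Suc)
  have "- (real J + 1) * (2*J+3) * aa m (Suc J) * (2*J+1) * (2*J+2) = 4 * (J+1) * (-4)^J * cc (Suc k) * (Y * ((2*J+1) * (2*J+2)))"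
    by (simp add: e2 field_simps)
  also have "\<dots> = 2 * (-4)^J * (real m - real J) * X * (J+1) * (cc (Suc k) * (2 * real k + 2))"
    by (simp only: Y) (simp add: algebra_simps)
  also have "\<dots> = 2 * (-4)^J * (real m - real J) * X * (J+1) * (cc k * (2 * real k + 1))"
    by (simp only: C)
  also have "\<dots> = (real m * (2*m+1) - real J * (2*J+1)) * aa m J * (2*J+1) * (2*J+2)"
    by (simp add: e1 k_def field_simps)
  finally show ?thesis by simp
qed

lemma aa_tele: "real m * (2*m+1) * (\<Sum>j<J. aa m j) = - real J * (2*J+1) * aa m J"
proof (induction J)
  case 0 then show ?case by simp
next
  case (Suc J)
  have "real m * (2*m+1) * (\<Sum>j<Suc J. aa m j) = real m * (2*m+1) * (\<Sum>j<J. aa m j) + real m * (2*m+1) * aa m J"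
    by (simp add: algebra_simps)
  also have "\<dots> = (real m * (2*m+1) - real J * (2*J+1)) * aa m J" using Suc.IH by (simp add: algebra_simps)
  also have "\<dots> = - (real J + 1) * (2*J+3) * aa m (Suc J)" by (rule aa_step)
  finally show ?case by (simp add: algebra_simps)
qed

lemma aa_sum_zero: assumes "m \<ge> 1" shows "(\<Sum>j\<le>m. aa m j) = 0"
proof -
  have "Suc (m + m) choose Suc (Suc (2 * m)) = 0" by simp
  then have "aa m (Suc m) = 0" by (simp add: aa_def del: binomial_Suc_Suc)
  then have "real m * (2*m+1) * (\<Sum>j<Suc m. aa m j) = 0" using aa_tele[of m "Suc m"] by simp
  moreover have "real m * (2*m+1) \<noteq> 0" using assms by simp
  ultimately show ?thesis by (simp add: lessThan_Suc_atMost)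
qed



definition Asum :: "nat \<Rightarrow> real" where "Asum m = (\<Sum>j\<le>m. cc (m+j) * rr (m+j) j)"
definition Bsum :: "nat \<Rightarrow> real" where "Bsum m = (\<Sum>j\<le>m+1. cc (m+j) * ss (m+j) j)"
definition Csum :: "nat \<Rightarrow> real" where "Csum m = (\<Sum>j\<le>m+1. cc (m+j) * ss (m+j-1) j)"
definition Dsum :: "nat \<Rightarrow> real" where "Dsum m = (\<Sum>j\<le>m. cc (m+j) * rr (m+j-1) j)"

lemma cc_1': "cc (Suc 0) = sqrt pi / 2" using cc_1 by simp

lemma rr_zero: "k < 2*j \<Longrightarrow> rr k j = 0" by (simp add: rr_def binomial_eq_0)
lemma ss_zero: assumes "k + 1 < 2*j" shows "ss k j = 0"
proof -
  have "0 < j" using assms by simp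
  then show ?thesis using assms by (simp add: ss_def binomial_eq_0)
qed

lemma rr_pt: assumes "j \<le> m" shows "cc (m+j) * rr (m+j) j = (-1::real)^m * (2*real m+1) * aa m j"
proof -
  define P where "P = real ((m+j) choose (2*j))"
  define Q where "Q = real ((m+j) choose (2*j+1))"
  have L: "Q * (2*j+1) = P * (real m - real j)"
  proof -
    have "((m+j) choose Suc (2*j)) * Suc (2*j) = ((m+j) choose (2*j)) * (m + j - 2*j)" by (rule choose_L2)
    then have "real (((m+j) choose Suc (2*j)) * Suc (2*j)) = real (((m+j) choose (2*j)) * (m + j - 2*j))" by simp
    moreover have "real (m + j - 2*j) = real m - real j" using assms by (simp add: of_nat_diff)
    ultimately show ?thesis unfolding P_def Q_def by (simp add: algebra_simps)
  qed
  have s: "(-1::real)^(m+j) * 4^j = (-1)^m * (-4)^j" by (simp add: power_add power_mult_distrib[symmetric])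
  have "cc (m+j) * rr (m+j) j = cc (m+j) * ((-1)^(m+j) * 4^j) * (P + 2*Q)"
    by (simp add: rr_def P_def Q_def)
  also have "\<dots> = cc (m+j) * ((-1)^m * (-4)^j) * (P * (2*j+1) + 2*(Q*(2*j+1))) / (2*j+1)"
    by (simp only: s) (simp add: field_simps)
  also have "\<dots> = (-1::real)^m * (2*real m+1) * aa m j"
    unfolding L aa_def P_def by (simp add: field_simps)
  finally show ?thesis .
qed

lemma Asum_aa: "Asum m = (-1::real)^m * (2*real m+1) * (\<Sum>j\<le>m. aa m j)"
  unfolding Asum_def sum_distrib_left by (rule sum.cong) (simp_all add: rr_pt)

lemma Asum_val: "Asum m = (if m = 0 then sqrt pi else 0)"
proof (cases "m = 0")
  case True then show ?thesis by (simp add: Asum_def rr_0 cc_0)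
next
  case False then show ?thesis by (simp add: Asum_aa aa_sum_zero)
qed

definition XX :: "nat \<Rightarrow> nat \<Rightarrow> real" where
  "XX m j = 2 * (-1)^(m+j) * 4^j * cc (m+j) * real ((m+j) choose (2*j+1))"
definition YY :: "nat \<Rightarrow> nat \<Rightarrow> real" where
  "YY m j = (if j = 0 then 0 else 2 * (-1)^(m+j) * 4^(j-1) * cc (m+j) * real ((m+j) choose (2*j-1)))"

lemma ss_XY: "cc (m+j) * ss (m+j) j = XX m j - YY m j"
  by (simp add: ss_def XX_def YY_def algebra_simps)

lemma XY_pt: assumes "j \<le> m" shows "XX m j - YY m (Suc j) = (-1::real)^m * (4*real m+1) * aa m j"
proof -
  define k where "k = m + j"
  define P where "P = real (k choose (2*j))"
  define Q where "Q = real (k choose (2*j+1))"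
  define T where "T = real (Suc k choose Suc (2*j))"
  define c0 where "c0 = cc k"
  define c1 where "c1 = cc (Suc k)"
  define s where "s = (-1::real)^(m+j) * 4^j"
  have LQ: "Q * (2*j+1) = P * (real m - real j)"
  proof -
    have "(k choose Suc (2*j)) * Suc (2*j) = (k choose (2*j)) * (k - 2*j)" by (rule choose_L2)
    then have e: "real (k choose Suc (2*j)) * real (Suc (2*j)) = real (k choose (2*j)) * real (k - 2*j)"
      by (simp only: of_nat_mult[symmetric])
    have kd: "real (k - 2*j) = real m - real j" using assms by (simp add: of_nat_diff k_def)
    show ?thesis using e unfolding kd P_def Q_def by (simp add: algebra_simps)
  qed
  have LT: "T * (2*j+1) = (real k + 1) * P"
  proof -
    have "Suc (2*j) * (Suc k choose Suc (2*j)) = Suc k * (k choose (2*j))" by (rule Suc_times_binomial)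
    then have "real (Suc (2*j) * (Suc k choose Suc (2*j))) = real (Suc k * (k choose (2*j)))" by (simp only:)
    then show ?thesis unfolding T_def P_def by (simp add: algebra_simps)
  qed
  have LC: "c1 * (2 * real k + 2) = c0 * (2 * real k + 1)" unfolding c0_def c1_def by (rule cc_Suc)
  have eX: "XX m j = 2 * s * c0 * Q" by (simp add: XX_def s_def c0_def Q_def k_def)
  have eY: "YY m (Suc j) = - 2 * s * c1 * T"
    by (simp add: YY_def s_def c1_def T_def k_def del: binomial_Suc_Suc)
  have mm: "(-1::real)^m * (-1)^m = 1" by (simp add: power_add[symmetric])
  have sg: "(-1::real)^m * s = (-4)^j"
  proof -
    have "(-1::real)^m * s = ((-1)^m * (-1)^m) * ((-1)^j * 4^j)" by (simp add: s_def power_add mult_ac)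
    also have "\<dots> = (-4)^j" by (simp only: mm) (simp add: power_mult_distrib[symmetric])
    finally show ?thesis .
  qed
  have ea: "aa m j = (-1)^m * s * c0 * P / (2*j+1)"
    unfolding aa_def sg by (simp add: c0_def P_def k_def)
  have "(XX m j - YY m (Suc j)) * (2*j+1) = 2 * s * (c0 * (Q * (2*j+1)) + c1 * (T * (2*j+1)))"
    unfolding eX eY by (simp add: algebra_simps)
  also have "\<dots> = 2 * s * (c0 * P * (real m - real j) + (c1 * (2 * real k + 2)) * P / 2)"
    unfolding LQ LT by (simp add: algebra_simps)
  also have "\<dots> = s * c0 * P * (2 * real m - 2 * real j + 2 * real k + 1)"
    unfolding LC by (simp add: algebra_simps)
  also have "\<dots> = s * c0 * P * (4 * real m + 1)" by (simp add: k_def)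
  finally have "(XX m j - YY m (Suc j)) * (2*j+1) = s * c0 * P * (4 * real m + 1)" .
  then have "XX m j - YY m (Suc j) = s * c0 * P * (4 * real m + 1) / (2*j+1)"
    by (simp add: field_simps)
  also have "\<dots> = (-1::real)^m * (4*real m+1) * aa m j" unfolding ea by (simp add: field_simps)
  finally show ?thesis .
qed

lemma Bsum_aa: "Bsum m = (-1::real)^m * (4*real m+1) * (\<Sum>j\<le>m. aa m j)"
proof -
  have "m + Suc m choose (2 * Suc m + 1) = 0" by (simp add: binomial_eq_0)
  then have x0: "XX m (Suc m) = 0" by (simp add: XX_def del: binomial_Suc_Suc)
  have "Bsum m = (\<Sum>j\<le>Suc m. XX m j) - (\<Sum>j\<le>Suc m. YY m j)"
    by (simp add: Bsum_def ss_XY sum_subtractf)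
  also have "\<dots> = (\<Sum>j\<le>m. XX m j) - (\<Sum>j\<le>m. YY m (Suc j))"
  proof -
    have "(\<Sum>j\<le>Suc m. XX m j) = (\<Sum>j\<le>m. XX m j)" using x0 by (simp only: sum.atMost_Suc)
    moreover have "(\<Sum>j\<le>Suc m. YY m j) = (\<Sum>j\<le>m. YY m (Suc j))" 
      by (simp only: sum.atMost_Suc_shift) (simp add: YY_def)
    ultimately show ?thesis by simp
  qed
  also have "\<dots> = (\<Sum>j\<le>m. XX m j - YY m (Suc j))" by (simp add: sum_subtractf)
  also have "\<dots> = (\<Sum>j\<le>m. (-1::real)^m * (4*real m+1) * aa m j)" by (rule sum.cong) (simp_all add: XY_pt)
  finally show ?thesis by (simp add: sum_distrib_left)
qed

lemma Bsum_val: "Bsum m = (if m = 0 then sqrt pi else 0)"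
proof (cases "m = 0")
  case True then show ?thesis by (simp add: Bsum_aa aa_def cc_0)
next
  case False then show ?thesis by (simp add: Bsum_aa aa_sum_zero)
qed

lemma Rel1: assumes "m \<ge> 1" shows "Asum m = -3 * Dsum m + 2 * Csum m"
proof -
  have "Asum m = (\<Sum>j\<le>m. cc (m+j) * (-3 * rr (m+j-1) j + 2 * ss (m+j-1) j))"
    unfolding Asum_def
  proof (rule sum.cong[OF refl])
    fix j assume "j \<in> {..m}"
    have "m + j = Suc (m+j-1)" using assms by simp
    then show "cc (m+j) * rr (m+j) j = cc (m+j) * (-3 * rr (m+j-1) j + 2 * ss (m+j-1) j)"
      using rr_Suc[of "m+j-1" j] by simp
  qed
  also have "\<dots> = (\<Sum>j\<le>m. -3 * (cc (m+j) * rr (m+j-1) j) + 2 * (cc (m+j) * ss (m+j-1) j))"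
    by (rule sum.cong) (simp_all add: algebra_simps)
  also have "\<dots> = (\<Sum>j\<le>m. -3 * (cc (m+j) * rr (m+j-1) j)) + (\<Sum>j\<le>m. 2 * (cc (m+j) * ss (m+j-1) j))"
    by (rule sum.distrib)
  also have "\<dots> = -3 * Dsum m + 2 * (\<Sum>j\<le>m. cc (m+j) * ss (m+j-1) j)"
    unfolding Dsum_def by (simp only: sum_distrib_left)
  also have "(\<Sum>j\<le>m. cc (m+j) * ss (m+j-1) j) = Csum m"
    unfolding Csum_def using ss_zero[of "m + Suc m - 1" "Suc m"] assms by simp
  finally show ?thesis .
qed

lemma Rel2: assumes "m \<ge> 1" shows "Bsum m = -2 * Dsum m + Csum m + 2 * Dsum (m+1)"
proof -
  have "Bsum m = (\<Sum>j\<le>Suc m. cc (m+j) * (-2 * rr (m+j-1) j + ss (m+j-1) j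
          + (if j = 0 then 0 else 2 * rr (m+j-1) (j-1))))"
    unfolding Bsum_def
  proof (rule sum.cong)
    fix j assume "j \<in> {..Suc m}"
    have "m + j = Suc (m+j-1)" using assms by simp
    then show "cc (m+j) * ss (m+j) j = cc (m+j) * (-2 * rr (m+j-1) j + ss (m+j-1) j
          + (if j = 0 then 0 else 2 * rr (m+j-1) (j-1)))"
      using ss_Suc[of "m+j-1" j] by simp
  qed simp
  also have "\<dots> = (\<Sum>j\<le>Suc m. -2 * (cc (m+j) * rr (m+j-1) j) + cc (m+j) * ss (m+j-1) j
       + 2 * (if j = 0 then 0 else cc (m+j) * rr (m+j-1) (j-1)))"
    by (rule sum.cong) (simp_all add: algebra_simps)
  also have "\<dots> = -2 * (\<Sum>j\<le>Suc m. cc (m+j) * rr (m+j-1) j) + Csum m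
       + 2 * (\<Sum>j\<le>Suc m. (if j = 0 then 0 else cc (m+j) * rr (m+j-1) (j-1)))"
    unfolding Csum_def by (simp only: sum.distrib sum_distrib_left Suc_eq_plus1)
  also have "(\<Sum>j\<le>Suc m. cc (m+j) * rr (m+j-1) j) = Dsum m"
    unfolding Dsum_def using rr_zero[of "m + Suc m - 1" "Suc m"] assms by simp
  also have "(\<Sum>j\<le>Suc m. (if j = 0 then 0 else cc (m+j) * rr (m+j-1) (j-1))) = 
      (\<Sum>j\<le>m. cc (m+1+j) * rr (m+j) j)"
    by (simp only: sum.atMost_Suc_shift) simp
  also have "\<dots> = Dsum (m+1)"
    unfolding Dsum_def using rr_zero[of "m + 1 + Suc m - 1" "Suc m"] by simp
  finally show ?thesis .
qed

lemma Dsum_1: "Dsum (Suc 0) = sqrt pi / 2"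
proof -
  have "Dsum (Suc 0) = cc 1 * rr 0 0 + cc 2 * rr 1 1"
    by (simp add: Dsum_def numeral_2_eq_2)
  also have "rr 1 1 = 0" by (simp add: rr_def binomial_eq_0)
  finally show ?thesis by (simp add: rr_0 cc_1 cc_1')
qed

lemma Dsum_val: "m \<ge> 1 \<Longrightarrow> Dsum m = 2 * sqrt pi / 4^m"
proof (induction m rule: dec_induct)
  case base then show ?case by (simp add: Dsum_1)
next
  case (step m)
  have "0 = -3 * Dsum m + 2 * Csum m" using Rel1[OF step(1)] Asum_val[of m] step(1) by simp
  moreover have "0 = -2 * Dsum m + Csum m + 2 * Dsum (m+1)" using Rel2[OF step(1)] Bsum_val[of m] step(1) by simp
  ultimately have "Dsum (m+1) = Dsum m / 4" by simp
  then show ?case using step(3) by simp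
qed

lemma Csum_val: "m \<ge> 1 \<Longrightarrow> Csum m = 3 * sqrt pi / 4^m"
  using Rel1[of m] Asum_val[of m] Dsum_val[of m] by simp



definition gg :: "nat \<Rightarrow> real" where "gg n = Gamma (real n + 1/2)"

lemma gg_pos: "gg n > 0" by (simp add: gg_def gm_pos)
lemma gg_0: "gg 0 = sqrt pi" by (simp add: gg_def Gamma_one_half_real)
lemma gg_Suc: "gg (Suc n) = (real n + 1/2) * gg n" by (simp only: gg_def gm_Suc)
lemma gg_32: "Gamma (real n + 3/2) = gg (Suc n)"
  by (simp add: gg_def add.commute)

lemma brace_mj: "brace (int m) (int j) = cc (m+j) / gg m"
proof -
  have "int m + int j = int (m+j)" by simp
  then show ?thesis by (simp only: brace_def cc_def gg_def nat_int of_int_of_nat_eq) simp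
qed

lemma brace_Z: "brace (int n + 1) (int j - 1) = cc (n+j) / gg (Suc n)"
proof -
  have "int n + 1 + (int j - 1) = int (n+j)" by simp
  moreover have "(of_int (int n + 1) :: real) + 1/2 = real (Suc n) + 1/2" by simp
  ultimately show ?thesis by (simp only: brace_def cc_def gg_def nat_int of_int_of_nat_eq) simp
qed

lemma brace_Z': "brace (1 + int n) (int j - 1) = cc (n+j) / gg (Suc n)"
  using brace_Z by (simp add: add.commute)

lemma fin_lsum: "finite I \<Longrightarrow> \<forall>i\<in>I. fin (A i) \<Longrightarrow> fin (\<lambda>u. \<Sum>i\<in>I. c i * A i u)"
  by (rule fin_sum) (auto intro: fin_scale)

lemma weight_lsum: "finite I \<Longrightarrow> \<forall>i\<in>I. fin (A i) \<Longrightarrow>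
   weight (\<lambda>u. \<Sum>i\<in>I. c i * A i u) = (\<Sum>i\<in>I. c i * weight (A i))"
  by (subst weight_sum) (auto intro: fin_scale simp: weight_scale)

lemma bar_lsum: "nc_bar (\<lambda>u. \<Sum>i\<in>I. c i * A i u) = (\<lambda>u. \<Sum>i\<in>I. c i * nc_bar (A i) u)"
  by (simp add: nc_bar_def)

lemma lsum_nil: "(\<lambda>u. \<Sum>i\<in>I. c i * A i u) [] = (\<Sum>i\<in>I. c i * A i [])" by simp

lemmas Rp = RS_props[THEN conjunct1] RS_props[THEN conjunct2, THEN conjunct1]
  RS_props[THEN conjunct2, THEN conjunct2, THEN conjunct1]
  RS_props[THEN conjunct2, THEN conjunct2, THEN conjunct2, THEN conjunct1]
  RS_props[THEN conjunct2, THEN conjunct2, THEN conjunct2, THEN conjunct2, THEN conjunct1]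
  RS_props[THEN conjunct2, THEN conjunct2, THEN conjunct2, THEN conjunct2, THEN conjunct2, THEN conjunct1]
  RS_props[THEN conjunct2, THEN conjunct2, THEN conjunct2, THEN conjunct2, THEN conjunct2, THEN conjunct2, THEN conjunct1]
  RS_props[THEN conjunct2, THEN conjunct2, THEN conjunct2, THEN conjunct2, THEN conjunct2, THEN conjunct2, THEN conjunct2]

lemma alpha_eq: "alpha m = (\<lambda>u. \<Sum>j\<le>m+1. brace (int m) (int j) * S (m + j) j u)"
  by (simp add: alpha_def atLeast0AtMost)
lemma Zsucc_eq: "Zsucc n = (\<lambda>u. \<Sum>j\<le>n. brace (int n + 1) (int j - 1) * R (n + j) j u)"
  by (simp add: Zsucc_def atLeast0AtMost)

lemma fin_alpha: "fin (alpha m)" unfolding alpha_eq by (rule fin_lsum) (simp_all add: Rp)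
lemma fin_Zsucc: "fin (Zsucc m)" unfolding Zsucc_eq by (rule fin_lsum) (simp_all add: Rp)
lemma alpha_nil: "alpha m [] = 0" unfolding alpha_eq by (simp add: Rp)

lemma w_alpha: "weight (alpha m) = (if m = 0 then 1 else 0)"
proof -
  have "weight (alpha m) = (\<Sum>j\<le>m+1. brace (int m) (int j) * ss (m+j) j)"
    unfolding alpha_eq by (subst weight_lsum) (simp_all add: Rp)
  also have "\<dots> = Bsum m / gg m" unfolding Bsum_def sum_divide_distrib
    by (rule sum.cong) (simp_all add: brace_mj)
  finally show ?thesis by (simp add: Bsum_val gg_0)
qed

lemma wb_alpha: "weight (nc_bar (alpha m)) = (if m = 0 then 1/2 else - (3/2) * sqrt pi / (4^m * gg m))"
proof -
  have "weight (nc_bar (alpha m)) = (\<Sum>j\<le>m+1. brace (int m) (int j) * sbb (m+j) j)"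
    unfolding alpha_eq bar_lsum by (subst weight_lsum) (simp_all add: Rp fin_bar)
  also have "\<dots> = (Bsum m - Csum m) / (2 * gg m)"
    unfolding Bsum_def Csum_def sum_subtractf[symmetric] sum_divide_distrib
    by (rule sum.cong) (simp_all add: brace_mj sbb_def field_simps)
  finally have e: "weight (nc_bar (alpha m)) = (Bsum m - Csum m) / (2 * gg m)" .
  show ?thesis
  proof (cases "m = 0")
    case True
    have "Csum 0 = 0" by (simp add: Csum_def ss_0)
    then show ?thesis using True e by (simp add: Bsum_val gg_0)
  next
    case False
    then show ?thesis using e by (simp add: Bsum_val Csum_val)
  qed
qed

lemma w_Zsucc: "weight (Zsucc n) = (if n = 0 then 2 else 0)"
proof -
  have "weight (Zsucc n) = (\<Sum>j\<le>n. brace (int n + 1) (int j - 1) * rr (n+j) j)"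
    unfolding Zsucc_eq by (subst weight_lsum) (simp_all add: Rp)
  also have "\<dots> = Asum n / gg (Suc n)" unfolding Asum_def sum_divide_distrib
    by (rule sum.cong) (simp_all add: brace_Z)
  finally show ?thesis by (simp add: Asum_val gg_Suc gg_0)
qed

lemma wb_Zsucc: "weight (nc_bar (Zsucc n)) = (if n = 0 then 0 else - sqrt pi / (4^n * gg (Suc n)))"
proof -
  have "weight (nc_bar (Zsucc n)) = (\<Sum>j\<le>n. brace (int n + 1) (int j - 1) * rbb (n+j) j)"
    unfolding Zsucc_eq bar_lsum by (subst weight_lsum) (simp_all add: Rp fin_bar)
  also have "\<dots> = (Asum n - Dsum n) / (2 * gg (Suc n))"
    unfolding Asum_def Dsum_def sum_subtractf[symmetric] sum_divide_distrib
    by (rule sum.cong) (simp_all add: brace_Z' rbb_def field_simps)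
  finally have e: "weight (nc_bar (Zsucc n)) = (Asum n - Dsum n) / (2 * gg (Suc n))" .
  show ?thesis
  proof (cases "n = 0")
    case True
    have "Dsum 0 = sqrt pi" by (simp add: Dsum_def rr_0 cc_0)
    then show ?thesis using True e by (simp add: Asum_val)
  next
    case False
    then show ?thesis using e by (simp add: Asum_val Dsum_val)
  qed
qed



declare Dop.simps[simp del]

lemma Dop_1: "Dop 1 = nc_smult (2 / sqrt pi) nc_one"
  by (subst Dop.simps) simp

lemma Dop_even: "n \<ge> 1 \<Longrightarrow> Dop (2*n) = (\<lambda>u. \<Sum>i=1..n. (1 / sqrt pi) * (Gamma (real i + 1/2) * Gamma (real (n - i) + 1/2) / fact n)
                 * nc_mult (Dop (2 * i - 1)) (alpha (n - i)) u)"
  by (subst Dop.simps) (simp add: Let_def)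

lemma Dop_odd: "n \<ge> 1 \<Longrightarrow> Dop (2*n+1) = (\<lambda>u. (1 / sqrt pi) * Zsucc n u +
             (\<Sum>i=1..n. (1 / sqrt pi) * (fact i * Gamma (real (n - i) + 1/2) / Gamma (real n + 3/2))
                 * nc_mult (Dop (2 * i)) (alpha (n - i)) u))"
  by (subst Dop.simps) (simp add: Let_def)

definition WW :: "nat \<Rightarrow> real" where
  "WW k = (if even k then 1 / fact (k div 2) else 1 / gg (Suc (k div 2)))"

lemma sum_single: "(n::nat) \<ge> 1 \<Longrightarrow> (\<Sum>i=1..n. (if i = n then a else (0::real))) = a"
proof -
  assume "n \<ge> 1"
  then have "n \<in> {1..n}" by simp
  then show ?thesis by (simp add: sum.delta')
qed

lemma Dop_W: "k \<ge> 1 \<Longrightarrow> fin (Dop k) \<and> weight (Dop k) = WW k"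
proof (induction k rule: less_induct)
  case (less k)
  show ?case
  proof (cases "k = 1")
    case True
    have g1: "gg (Suc 0) = sqrt pi / 2" using gg_Suc[of 0] by (simp add: gg_0)
    show ?thesis unfolding True Dop_1 by (simp add: fin_smult fin_one weight_smult weight_one WW_def g1)
  next
    case False
    show ?thesis
    proof (cases "even k")
      case True
      then obtain n where k: "k = 2*n" by blast
      with False less.prems have n1: "n \<ge> 1" by simp
      have IH: "\<And>i. i \<in> {1..n} \<Longrightarrow> fin (Dop (2*i-1)) \<and> weight (Dop (2*i-1)) = 1 / gg i"
      proof -
        fix i assume i: "i \<in> {1..n}"
        then have "2*i-1 < k" "2*i-1 \<ge> 1" using k by auto
        moreover have "\<not> even (2*i-1)" "Suc ((2*i-1) div 2) = i" using i by presburger+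
        ultimately show "fin (Dop (2*i-1)) \<and> weight (Dop (2*i-1)) = 1 / gg i"
          using less.IH[of "2*i-1"] by (simp add: WW_def)
      qed
      have fin: "fin (Dop k)" unfolding k Dop_even[OF n1]
        by (rule fin_lsum) (use IH fin_alpha fin_mult in blast)+
      have FM: "\<forall>i\<in>{1..n}. fin (nc_mult (Dop (2 * i - 1)) (alpha (n - i)))"
        using IH fin_alpha fin_mult by blast
      have "weight (Dop k) = (\<Sum>i=1..n. (1 / sqrt pi) * (gg i * gg (n - i) / fact n)
                 * weight (nc_mult (Dop (2 * i - 1)) (alpha (n - i))))"
        unfolding k Dop_even[OF n1] gg_def[symmetric] by (rule weight_lsum[OF _ FM]) simp
      also have "\<dots> = (\<Sum>i=1..n. (if i = n then 1 / fact n else 0))"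
      proof (rule sum.cong[OF refl])
        fix i assume i: "i \<in> {1..n}"
        have w: "weight (nc_mult (Dop (2 * i - 1)) (alpha (n - i))) = (1 / gg i) * (if i = n then 1 else 0)"
          using IH[OF i] fin_alpha weight_mult w_alpha i by auto
        show "(1 / sqrt pi) * (gg i * gg (n - i) / fact n) * weight (nc_mult (Dop (2 * i - 1)) (alpha (n - i)))
              = (if i = n then 1 / fact n else 0)"
          unfolding w using gg_pos[of i] by (simp add: gg_0)
      qed
      also have "\<dots> = 1 / fact n" using n1 by (rule sum_single)
      finally show ?thesis using fin k by (simp add: WW_def)
    next
      case False
      then obtain n where k: "k = 2*n+1" using oddE by blast
      with \<open>k \<noteq> 1\<close> have n1: "n \<ge> 1" by simp
      have IH: "\<And>i. i \<in> {1..n} \<Longrightarrow> fin (Dop (2*i)) \<and> weight (Dop (2*i)) = 1 / fact i"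
      proof -
        fix i assume i: "i \<in> {1..n}"
        then have "2*i < k" "2*i \<ge> 1" using k by auto
        then show "fin (Dop (2*i)) \<and> weight (Dop (2*i)) = 1 / fact i"
          using less.IH[of "2*i"] by (simp add: WW_def)
      qed
      have e: "Dop k = nc_add (\<lambda>u. (1 / sqrt pi) * Zsucc n u)
             (\<lambda>u. \<Sum>i=1..n. (1 / sqrt pi) * (fact i * Gamma (real (n - i) + 1/2) / Gamma (real n + 3/2))
                 * nc_mult (Dop (2 * i)) (alpha (n - i)) u)"
        unfolding k Dop_odd[OF n1] nc_add_def ..
      have fins: "fin (\<lambda>u. \<Sum>i=1..n. (1 / sqrt pi) * (fact i * Gamma (real (n - i) + 1/2) / Gamma (real n + 3/2))
                 * nc_mult (Dop (2 * i)) (alpha (n - i)) u)"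
        by (rule fin_lsum) (use IH fin_alpha fin_mult in blast)+
      have fin: "fin (Dop k)" unfolding e by (rule fin_add[OF fin_scale[OF fin_Zsucc] fins])
      have FM: "\<forall>i\<in>{1..n}. fin (nc_mult (Dop (2 * i)) (alpha (n - i)))"
        using IH fin_alpha fin_mult by blast
      have "weight (Dop k) = (1 / sqrt pi) * weight (Zsucc n) + (\<Sum>i=1..n. (1 / sqrt pi) * (fact i * Gamma (real (n - i) + 1/2) / Gamma (real n + 3/2))
                 * weight (nc_mult (Dop (2 * i)) (alpha (n - i))))"
        unfolding e weight_add[OF fin_scale[OF fin_Zsucc] fins] weight_scale[OF fin_Zsucc]
          weight_lsum[OF finite_atLeastAtMost FM] ..
      also have "\<dots> = (\<Sum>i=1..n. (if i = n then 1 / gg (Suc n) else 0))"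
      proof -
        have "(1 / sqrt pi) * weight (Zsucc n) = 0" using n1 by (simp add: w_Zsucc)
        moreover have "(\<Sum>i=1..n. (1 / sqrt pi) * (fact i * Gamma (real (n - i) + 1/2) / Gamma (real n + 3/2))
                 * weight (nc_mult (Dop (2 * i)) (alpha (n - i)))) = (\<Sum>i=1..n. (if i = n then 1 / gg (Suc n) else 0))"
        proof (rule sum.cong[OF refl])
          fix i assume i: "i \<in> {1..n}"
          have w: "weight (nc_mult (Dop (2 * i)) (alpha (n - i))) = (1 / fact i) * (if i = n then 1 else 0)"
            using IH[OF i] fin_alpha weight_mult w_alpha i by auto
          show "(1 / sqrt pi) * (fact i * Gamma (real (n - i) + 1/2) / Gamma (real n + 3/2)) * weight (nc_mult (Dop (2 * i)) (alpha (n - i)))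
              = (if i = n then 1 / gg (Suc n) else 0)"
            unfolding w gg_32 gg_def[symmetric] by (simp add: gg_0)
        qed
        ultimately show ?thesis by simp
      qed
      also have "\<dots> = 1 / gg (Suc n)" using n1 by (rule sum_single)
      finally show ?thesis using fin k by (simp add: WW_def)
    qed
  qed
qed



definition hh :: "nat \<Rightarrow> real" where "hh m = (if m = 0 then 1/2 else - (3/2) / 4^m)"

lemma gg_wb_alpha: "gg m * weight (nc_bar (alpha m)) = sqrt pi * hh m"
  using gg_pos[of m] by (simp add: wb_alpha hh_def gg_0)

lemma hh_sum: "n \<ge> 1 \<Longrightarrow> (\<Sum>m<n. hh m) = 2 / 4^n"
proof (induction n rule: dec_induct)
  case base then show ?case by (simp add: hh_def)
next
  case (step n)
  then show ?case by (simp add: hh_def field_simps)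
qed

lemma rev_sum: "(\<Sum>i=1..n. f (n - i)) = (\<Sum>m<n. (f m :: real))" for n :: nat and f :: "nat \<Rightarrow> real"
proof -
  have "(\<Sum>i=1..n. f (n - i)) = (\<Sum>k<n. f (n - Suc k))"
    using sum.atLeast1_atMost_eq[of "\<lambda>i. f (n - i)" n] by simp
  also have "\<dots> = (\<Sum>m<n. f m)" by (rule sum.nat_diff_reindex)
  finally show ?thesis .
qed

lemma Dop_W_even: "i \<ge> 1 \<Longrightarrow> fin (Dop (2*i)) \<and> weight (Dop (2*i)) = 1 / fact i"
  using Dop_W[of "2*i"] by (simp add: WW_def)
lemma Dop_W_odd: "i \<ge> 1 \<Longrightarrow> fin (Dop (2*i-1)) \<and> weight (Dop (2*i-1)) = 1 / gg i"
proof -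
  assume i: "i \<ge> 1"
  then have "\<not> even (2*i-1)" "Suc ((2*i-1) div 2) = i" by presburger+
  then show ?thesis using Dop_W[of "2*i-1"] i by (simp add: WW_def)
qed

lemma WB_even: assumes n1: "n \<ge> 1" shows "weight (nc_bar (Dop (2*n))) = 2 / (4^n * fact n)"
proof -
  have FM: "\<forall>i\<in>{1..n}. fin (nc_bar (nc_mult (Dop (2 * i - 1)) (alpha (n - i))))"
    using Dop_W_odd fin_alpha fin_mult fin_bar by auto
  have "weight (nc_bar (Dop (2*n))) = (\<Sum>i=1..n. (1 / sqrt pi) * (Gamma (real i + 1/2) * Gamma (real (n - i) + 1/2) / fact n)
                 * weight (nc_bar (nc_mult (Dop (2 * i - 1)) (alpha (n - i)))))"
    unfolding Dop_even[OF n1] bar_lsum weight_lsum[OF finite_atLeastAtMost FM] ..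
  also have "\<dots> = (\<Sum>i=1..n. hh (n - i) / fact n)"
  proof (rule sum.cong[OF refl])
    fix i assume i: "i \<in> {1..n}"
    have w1: "weight (nc_bar (nc_mult (Dop (2 * i - 1)) (alpha (n - i)))) = (1 / gg i) * weight (nc_bar (alpha (n - i)))"
      using i Dop_W_odd[of i] by (simp add: weight_bar_mult fin_alpha alpha_nil)
    have w2: "weight (nc_bar (alpha (n - i))) = sqrt pi * hh (n - i) / gg (n-i)"
      using gg_wb_alpha[of "n-i"] gg_pos[of "n-i"] by (simp add: field_simps)
    show "(1 / sqrt pi) * (Gamma (real i + 1/2) * Gamma (real (n - i) + 1/2) / fact n)
                 * weight (nc_bar (nc_mult (Dop (2 * i - 1)) (alpha (n - i)))) = hh (n - i) / fact n"
      unfolding gg_def[symmetric] w1 w2 using gg_pos[of i] gg_pos[of "n-i"] by (simp add: field_simps)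
  qed
  also have "\<dots> = (\<Sum>m<n. hh m) / fact n" using rev_sum[of "\<lambda>m. hh m / fact n" n]
    by (simp add: sum_divide_distrib)
  also have "\<dots> = 2 / (4^n * fact n)" using n1 by (simp add: hh_sum)
  finally show ?thesis .
qed

lemma WB_odd: assumes n1: "n \<ge> 1" shows "weight (nc_bar (Dop (2*n+1))) = 1 / (4^n * gg (Suc n))"
proof -
  define T where "T = (\<lambda>u. \<Sum>i=1..n. (1 / sqrt pi) * (fact i * Gamma (real (n - i) + 1/2) / Gamma (real n + 3/2))
                 * nc_mult (Dop (2 * i)) (alpha (n - i)) u)"
  have FM: "\<forall>i\<in>{1..n}. fin (nc_bar (nc_mult (Dop (2 * i)) (alpha (n - i))))"
    using Dop_W_even fin_alpha fin_mult fin_bar by auto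
  have e: "Dop (2*n+1) = nc_add (\<lambda>u. (1 / sqrt pi) * Zsucc n u) T"
    unfolding Dop_odd[OF n1] nc_add_def T_def ..
  have fT: "fin (nc_bar T)" unfolding T_def bar_lsum by (rule fin_lsum[OF finite_atLeastAtMost FM])
  have "weight (nc_bar (Dop (2*n+1))) = (1 / sqrt pi) * weight (nc_bar (Zsucc n)) + weight (nc_bar T)"
    unfolding e bar_add bar_scale weight_add[OF fin_scale[OF fin_bar[OF fin_Zsucc]] fT]
      weight_scale[OF fin_bar[OF fin_Zsucc]] ..
  also have "weight (nc_bar T) = (\<Sum>i=1..n. (1 / sqrt pi) * (fact i * Gamma (real (n - i) + 1/2) / Gamma (real n + 3/2))
                 * weight (nc_bar (nc_mult (Dop (2 * i)) (alpha (n - i)))))"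
    unfolding T_def bar_lsum weight_lsum[OF finite_atLeastAtMost FM] ..
  also have "\<dots> = (\<Sum>i=1..n. hh (n - i) / gg (Suc n))"
  proof (rule sum.cong[OF refl])
    fix i assume i: "i \<in> {1..n}"
    have w1: "weight (nc_bar (nc_mult (Dop (2 * i)) (alpha (n - i)))) = (1 / fact i) * weight (nc_bar (alpha (n - i)))"
      using i Dop_W_even[of i] by (simp add: weight_bar_mult fin_alpha alpha_nil)
    have w2: "weight (nc_bar (alpha (n - i))) = sqrt pi * hh (n - i) / gg (n-i)"
      using gg_wb_alpha[of "n-i"] gg_pos[of "n-i"] by (simp add: field_simps)
    show "(1 / sqrt pi) * (fact i * Gamma (real (n - i) + 1/2) / Gamma (real n + 3/2))
                 * weight (nc_bar (nc_mult (Dop (2 * i)) (alpha (n - i)))) = hh (n - i) / gg (Suc n)"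
      unfolding gg_32 gg_def[symmetric] w1 w2 using gg_pos[of "Suc n"] gg_pos[of "n-i"] by (simp add: field_simps)
  qed
  also have "\<dots> = (\<Sum>m<n. hh m) / gg (Suc n)" using rev_sum[of "\<lambda>m. hh m / gg (Suc n)" n]
    by (simp add: sum_divide_distrib)
  finally have "weight (nc_bar (Dop (2*n+1))) = (1 / sqrt pi) * weight (nc_bar (Zsucc n)) + (2 / 4^n) / gg (Suc n)"
    using n1 by (simp add: hh_sum)
  also have "\<dots> = 1 / (4^n * gg (Suc n))"
    using n1 gg_pos[of "Suc n"] by (simp add: wb_Zsucc field_simps)
  finally show ?thesis .
qed

lemma dfact_pos: "dfact n > 0"
  by (induction n rule: dfact.induct) simp_all

lemma gg_dfact: "gg (Suc n) * 2^(Suc n) = sqrt pi * real (dfact (2*n+1))"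
proof (induction n)
  case 0 then show ?case using gg_Suc[of 0] by (simp add: gg_0)
next
  case (Suc n)
  have d: "dfact (2 * Suc n + 1) = (2*n+3) * dfact (2*n+1)"
    by (simp add: numeral_eq_Suc)
  have "gg (Suc (Suc n)) * 2^(Suc (Suc n)) = (2 * real n + 3) * (gg (Suc n) * 2^(Suc n))"
    by (simp add: gg_Suc[of "Suc n"] algebra_simps)
  also have "\<dots> = sqrt pi * real (dfact (2 * Suc n + 1))" unfolding Suc d by simp
  finally show ?case .
qed

theorem theorem4p3:
  shows "(\<forall>n::nat. n \<ge> 1 \<longrightarrow>
            weight (nc_bar (Dop (2 * n))) = 2 / (4 ^ n * fact n) \<and>
            weight (nc_bar (Dop (2 * n + 1))) =
              (1 / sqrt pi) * (1 / (2 ^ (n - 1) * real (dfact (2 * n + 1)))))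
         \<and> (\<forall>k::nat. k \<ge> 2 \<longrightarrow> weight (nc_bar (Dop k)) \<noteq> 0)"
proof (intro conjI allI impI)
  fix n :: nat assume n1: "n \<ge> 1"
  show "weight (nc_bar (Dop (2 * n))) = 2 / (4 ^ n * fact n)" by (rule WB_even[OF n1])
  have p: "(4::real)^n = 2^(n-1) * 2^(Suc n)"
  proof -
    obtain m where m: "n = Suc m" using n1 by (cases n) auto
    show ?thesis unfolding m by (simp add: power_mult_distrib[symmetric] power_add[symmetric])
  qed
  have "weight (nc_bar (Dop (2 * n + 1))) = 1 / (4^n * gg (Suc n))" by (rule WB_odd[OF n1])
  also have "\<dots> = 1 / (2^(n-1) * (gg (Suc n) * 2^(Suc n)))" unfolding p by (simp add: mult_ac)
  also have "\<dots> = (1 / sqrt pi) * (1 / (2 ^ (n - 1) * real (dfact (2 * n + 1))))"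
    unfolding gg_dfact by simp
  finally show "weight (nc_bar (Dop (2 * n + 1))) = (1 / sqrt pi) * (1 / (2 ^ (n - 1) * real (dfact (2 * n + 1))))" .
next
  fix k :: nat assume k2: "k \<ge> 2"
  show "weight (nc_bar (Dop k)) \<noteq> 0"
  proof (cases "even k")
    case True
    then obtain n where k: "k = 2*n" by blast
    with k2 have "n \<ge> 1" by simp
    then show ?thesis unfolding k by (simp add: WB_even)
  next
    case False
    then obtain n where k: "k = 2*n+1" using oddE by blast
    with k2 have "n \<ge> 1" by simp
    then have "weight (nc_bar (Dop (2*n+1))) = 1 / (4^n * gg (Suc n))" by (rule WB_odd)
    then show ?thesis unfolding k using gg_pos[of "Suc n"] by simp
  qed
qed

end
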